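(* For every $n\ge 3$, the wheel $W_n$ is H$_2$--cordial.
   Context: The wheel $W_n$ has vertex set $\{v_0,v_1,\dots,v_n\}$ and edges $v_0v_i$ for $1\le i\le n$ together with the cycle edges $v_iv_{i+1}$ for $1\le i\le n$ (with $v_{n+1}=v_1$). For a positive integer $k$, an H$_k$--cordial labeling of a graph $G$ is a map $f:E(G)\to\mathbb{Z}$ such that, defining $f(v)=\sum_{e\in I(v)} f(e)$ for each vertex $v$ (where $I(v)$ is the set of edges incident to $v$), we have $1\le |f(e)|\le k$ for every edge $e$, $1\le |f(v)|\le k$ for every vertex $v$, and for each $i$ with $1\le i\le k$, $|e_f(i)-e_f(-i)|\le 1$ and $|v_f(i)-v_f(-i)|\le 1$; here $e_f(c)$ is the number of edges with label $c$ and $v_f(c)$ the number of vertices $v$ with $f(v)=c$. A graph is H$_k$--cordial if it admits an H$_k$--cordial labeling. *)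

theory Defs
  imports Main
begin

definition wheel_vertices :: "nat \<Rightarrow> nat set" where
  "wheel_vertices n = {0..n}"

definition wheel_edges :: "nat \<Rightarrow> nat set set" where
  "wheel_edges n = {{0, i} | i. 1 \<le> i \<and> i \<le> n} \<union>
                   {{i, (i mod n) + 1} | i. 1 \<le> i \<and> i \<le> n}"

definition vertex_label :: "'a set set \<Rightarrow> ('a set \<Rightarrow> int) \<Rightarrow> 'a \<Rightarrow> int" where
  "vertex_label E f v = (\<Sum>e\<in>{e\<in>E. v \<in> e}. f e)"

definition Hk_cordial_labeling ::
  "nat \<Rightarrow> 'a set \<Rightarrow> 'a set set \<Rightarrow> ('a set \<Rightarrow> int) \<Rightarrow> bool" where
  "Hk_cordial_labeling k V E f \<longleftrightarrow>
     (\<forall>e\<in>E. 1 \<le> \<bar>f e\<bar> \<and> \<bar>f e\<bar> \<le> int k) \<and>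
     (\<forall>v\<in>V. 1 \<le> \<bar>vertex_label E f v\<bar> \<and> \<bar>vertex_label E f v\<bar> \<le> int k) \<and>
     (\<forall>i::int. 1 \<le> i \<and> i \<le> int k \<longrightarrow>
        \<bar>int (card {e\<in>E. f e = i}) - int (card {e\<in>E. f e = - i})\<bar> \<le> 1 \<and>
        \<bar>int (card {v\<in>V. vertex_label E f v = i}) - int (card {v\<in>V. vertex_label E f v = - i})\<bar> \<le> 1)"

definition Hk_cordial :: "nat \<Rightarrow> 'a set \<Rightarrow> 'a set set \<Rightarrow> bool" where
  "Hk_cordial k V E \<longleftrightarrow> (\<exists>f. Hk_cordial_labeling k V E f)"

end

theory Submission imports Defs begin

definition sl :: "nat \<Rightarrow> nat \<Rightarrow> int" where
  "sl n i = (if i = 1 then 2 else if i = n div 2 + 1 then (if even n then -1 else -2)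
             else if i \<le> n div 2 then -1 else 1)"
definition rl :: "nat \<Rightarrow> nat \<Rightarrow> int" where
  "rl n i = (if i \<le> n div 2 then 1 else -1)"
definition lab :: "nat \<Rightarrow> nat set \<Rightarrow> int" where
  "lab n e = (if 0 \<in> e then sl n (Max e) else if Max e \<le> n div 2 + 1 then 1 else -1)"
definition pr :: "nat \<Rightarrow> nat \<Rightarrow> nat" where
  "pr n v = (if v = 1 then n else v - 1)"
definition Lv :: "nat \<Rightarrow> nat \<Rightarrow> int" where
  "Lv n v = (if v = 0 then 1 else if v = 1 then 2 else if v \<le> n div 2 then 1
             else if v = n div 2 + 1 then (if even n then -1 else -2) else -1)"

lemma edges_eq: "wheel_edges n = (\<lambda>i. {0,i}) ` {1..n} \<union> (\<lambda>i. {i, i mod n + 1}) ` {1..n}"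
  unfolding wheel_edges_def by auto

lemma inj_sp: "inj_on (\<lambda>i::nat. {0,i}) {1..n}"
  by (rule inj_onI) (metis doubleton_eq_iff)

lemma inj_rm: assumes "(n::nat) \<ge> 3" shows "inj_on (\<lambda>i. {i, i mod n + 1}) {1..n}"
proof (rule inj_onI)
  fix i j assume i: "i \<in> {1..n}" and j: "j \<in> {1..n}" and e: "{i, i mod n + 1} = {j, j mod n + 1}"
  show "i = j"
  proof (rule ccontr)
    assume ne: "i \<noteq> j"
    have "i \<in> {j, j mod n + 1}" using e by blast
    then have 1: "i = j mod n + 1" using ne by blast
    have "j \<in> {i, i mod n + 1}" using e by blast
    then have 2: "j = i mod n + 1" using ne by blast
    show False
    proof (cases "i = n")
      case True
      have "i mod n = 0" using True by simp
      then have "j = 1" using 2 by simp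
      then show False using 1 True assms by simp
    next
      case False
      then have "j = i + 1" using 2 i by simp
      then show False using 1 j assms by (cases "j = n") auto
    qed
  qed
qed

lemma lab_rm: assumes "n \<ge> 3" "i \<in> {1..n}" shows "lab n {i, i mod n + 1} = rl n i"
proof (cases "i = n")
  case True
  then show ?thesis using assms by (auto simp: lab_def rl_def)
next
  case False
  then have "i mod n = i" using assms by auto
  moreover have "Max {i, i+1} = i + 1" by (simp add: max_def)
  ultimately show ?thesis using assms by (auto simp: lab_def rl_def)
qed

lemma lab_sp: "lab n {0, i} = sl n i"
  by (auto simp: lab_def max_def)

lemma edge_card:
  assumes "n \<ge> 3"
  shows "card {e \<in> wheel_edges n. P (lab n e)} =
         card {i \<in> {1..n}. P (sl n i)} + card {i \<in> {1..n}. P (rl n i)}"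
proof -
  have eq: "{e \<in> wheel_edges n. P (lab n e)} =
     (\<lambda>i. {0,i}) ` {i \<in> {1..n}. P (sl n i)} \<union> (\<lambda>i. {i, i mod n + 1}) ` {i \<in> {1..n}. P (rl n i)}"
    unfolding edges_eq using lab_rm[OF assms] lab_sp by auto
  have d: "(\<lambda>i. {0,i}) ` {i \<in> {1..n}. P (sl n i)} \<inter> (\<lambda>i. {i, i mod n + 1}) ` {i \<in> {1..n}. P (rl n i)} = {}"
    by auto
  have "card ((\<lambda>i. {0,i}) ` {i \<in> {1..n}. P (sl n i)}) = card {i \<in> {1..n}. P (sl n i)}"
    by (rule card_image, rule inj_on_subset[OF inj_sp]) auto
  moreover have "card ((\<lambda>i. {i, i mod n + 1}) ` {i \<in> {1..n}. P (rl n i)}) = card {i \<in> {1..n}. P (rl n i)}"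
    by (rule card_image, rule inj_on_subset[OF inj_rm[OF assms]]) auto
  ultimately show ?thesis unfolding eq by (subst card_Un_disjoint) (use d in auto)
qed

lemma incident:
  assumes "n \<ge> 3" "v \<in> {1..n}"
  shows "{e \<in> wheel_edges n. v \<in> e} = {{0,v}, {v, v mod n + 1}, {pr n v, v}}"
proof -
  have a: "pr n v \<in> {1..n}" "pr n v mod n + 1 = v" using assms by (auto simp: pr_def)
  have b: "i = pr n v" if "i \<in> {1..n}" "i mod n + 1 = v" for i
    using that assms by (cases "i = n") (auto simp: pr_def)
  show ?thesis
  proof (rule set_eqI, rule iffI)
    fix e assume "e \<in> {e \<in> wheel_edges n. v \<in> e}"
    then have e: "e \<in> (\<lambda>i. {0,i}) ` {1..n} \<union> (\<lambda>i. {i, i mod n + 1}) ` {1..n}" and ve: "v \<in> e"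
      unfolding edges_eq by auto
    from e show "e \<in> {{0,v}, {v, v mod n + 1}, {pr n v, v}}"
    proof (elim UnE imageE)
      fix i assume "e = {0,i}" "i \<in> {1..n}"
      then show ?thesis using ve assms by auto
    next
      fix i assume ei: "e = {i, i mod n + 1}" and i: "i \<in> {1..n}"
      then have "v = i \<or> v = i mod n + 1" using ve by blast
      then show ?thesis
      proof
        assume "v = i" then show ?thesis using ei by simp
      next
        assume "v = i mod n + 1"
        then have "i = pr n v" using b i by simp
        then show ?thesis using ei a(2) by simp
      qed
    qed
  next
    fix e assume e: "e \<in> {{0,v}, {v, v mod n + 1}, {pr n v, v}}"
    have 1: "{0,v} \<in> wheel_edges n" unfolding edges_eq using assms(2) by blast
    have 2: "{v, v mod n + 1} \<in> wheel_edges n" unfolding edges_eq using assms(2) by blast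
    have 3: "{pr n v, pr n v mod n + 1} \<in> wheel_edges n" unfolding edges_eq using a(1) by blast
    show "e \<in> {e \<in> wheel_edges n. v \<in> e}" using e 1 2 3 a(2) by auto
  qed
qed


lemma vl_rim:
  assumes "n \<ge> 3" "v \<in> {1..n}"
  shows "vertex_label (wheel_edges n) (lab n) v = Lv n v"
proof -
  have p: "pr n v \<in> {1..n}" "pr n v mod n + 1 = v" using assms by (auto simp: pr_def)
  have d1: "{0,v} \<noteq> {v, v mod n + 1}" "{0,v} \<noteq> {pr n v, v}" using p assms by (auto simp: doubleton_eq_iff)
  have d2: "{v, v mod n + 1} \<noteq> {pr n v, v}"
    using assms by (cases "v = 1"; cases "v = n") (auto simp: pr_def doubleton_eq_iff)
  have "vertex_label (wheel_edges n) (lab n) v = lab n {0,v} + lab n {v, v mod n + 1} + lab n {pr n v, v}"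
    unfolding vertex_label_def incident[OF assms] using d1 d2 by simp
  also have "lab n {pr n v, v} = rl n (pr n v)"
    using lab_rm[OF assms(1) p(1)] p(2) by simp
  also have "lab n {v, v mod n + 1} = rl n v" using lab_rm[OF assms] .
  also have "lab n {0,v} = sl n v" by (rule lab_sp)
  finally have *: "vertex_label (wheel_edges n) (lab n) v = sl n v + rl n v + rl n (pr n v)" .
  define k where "k = n div 2"
  have k: "1 \<le> k" "k + 2 \<le> n" using assms by (auto simp: k_def)
  have "v = 1 \<or> (2 \<le> v \<and> v \<le> k) \<or> v = k + 1 \<or> k + 2 \<le> v" using assms by auto
  then show ?thesis
  proof (elim disjE)
    assume "v = 1" then show ?thesis using * k unfolding sl_def rl_def pr_def Lv_def k_def by auto
  next
    assume "2 \<le> v \<and> v \<le> k" then show ?thesis using * k unfolding sl_def rl_def pr_def Lv_def k_def by auto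
  next
    assume "v = k + 1" then show ?thesis using * k unfolding sl_def rl_def pr_def Lv_def k_def by auto
  next
    assume "k + 2 \<le> v" then show ?thesis using * k unfolding sl_def rl_def pr_def Lv_def k_def by auto
  qed
qed

lemma sum_sl:
  assumes "n \<ge> 3"
  shows "(\<Sum>i\<in>{1..n}. sl n i) = 1"
proof -
  define k where "k = n div 2"
  have k: "1 \<le> k" "k + 2 \<le> n" using assms by (auto simp: k_def)
  have eq: "{1..n} = insert 1 (insert (k+1) ({2..k} \<union> {k+2..n}))" using k by auto
  have s1: "(\<Sum>i\<in>{2..k}. sl n i) = - int (k - 1)"
  proof -
    have "(\<Sum>i\<in>{2..k}. sl n i) = (\<Sum>i\<in>{2..k}. -1)"
      by (rule sum.cong) (auto simp: sl_def k_def)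
    then show ?thesis by simp
  qed
  have s2: "(\<Sum>i\<in>{k+2..n}. sl n i) = int (n - k - 1)"
  proof -
    have "(\<Sum>i\<in>{k+2..n}. sl n i) = (\<Sum>i\<in>{k+2..n}. 1)"
      by (rule sum.cong) (auto simp: sl_def k_def)
    then show ?thesis by simp
  qed
  have "(\<Sum>i\<in>{1..n}. sl n i) = sl n 1 + (sl n (k+1) + ((\<Sum>i\<in>{2..k}. sl n i) + (\<Sum>i\<in>{k+2..n}. sl n i)))"
    unfolding eq using k by (simp add: sum.union_disjoint)
  also have "\<dots> = 1" using s1 s2 k unfolding sl_def k_def by (cases "even n") (auto elim!: evenE oddE)
  finally show ?thesis .
qed

lemma vl_hub:
  assumes "n \<ge> 3"
  shows "vertex_label (wheel_edges n) (lab n) 0 = Lv n 0"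
proof -
  have "{e \<in> wheel_edges n. 0 \<in> e} = (\<lambda>i. {0,i}) ` {1..n}" unfolding edges_eq by auto
  then have "vertex_label (wheel_edges n) (lab n) 0 = (\<Sum>i\<in>{1..n}. lab n {0,i})"
    unfolding vertex_label_def by (simp add: sum.reindex[OF inj_sp[of n]] del: One_nat_def)
  also have "\<dots> = 1" using sum_sl[OF assms] by (simp add: lab_sp)
  finally show ?thesis by (simp add: Lv_def)
qed

lemma vl: assumes "n \<ge> 3" "v \<in> {0..n}"
  shows "vertex_label (wheel_edges n) (lab n) v = Lv n v"
  using vl_rim[OF assms(1)] vl_hub[OF assms(1)] assms(2) by (cases "v = 0") auto


lemma sets:
  assumes "n \<ge> 3"
  defines "k \<equiv> n div 2"
  shows "{i\<in>{1..n}. sl n i = 1} = {k+2..n}"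
    and "{i\<in>{1..n}. sl n i = -1} = {2..k} \<union> {i. i = k+1 \<and> even n}"
    and "{i\<in>{1..n}. sl n i = 2} = {1}"
    and "{i\<in>{1..n}. sl n i = -2} = {i. i = k+1 \<and> odd n}"
    and "{i\<in>{1..n}. rl n i = 1} = {1..k}"
    and "{i\<in>{1..n}. rl n i = -1} = {k+1..n}"
    and "{i\<in>{1..n}. rl n i = 2} = {}"
    and "{i\<in>{1..n}. rl n i = -2} = {}"
    and "{v\<in>{0..n}. Lv n v = 1} = insert 0 {2..k}"
    and "{v\<in>{0..n}. Lv n v = -1} = {k+2..n} \<union> {i. i = k+1 \<and> even n}"
    and "{v\<in>{0..n}. Lv n v = 2} = {1}"
    and "{v\<in>{0..n}. Lv n v = -2} = {i. i = k+1 \<and> odd n}"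
proof -
  have k: "1 \<le> k" "k + 2 \<le> n" using assms by (auto simp: k_def)
  show "{i\<in>{1..n}. sl n i = 1} = {k+2..n}" using k by (auto simp: sl_def k_def)
  show "{i\<in>{1..n}. sl n i = -1} = {2..k} \<union> {i. i = k+1 \<and> even n}" using k by (auto simp: sl_def k_def)
  show "{i\<in>{1..n}. sl n i = 2} = {1}" using k by (auto simp: sl_def k_def)
  show "{i\<in>{1..n}. sl n i = -2} = {i. i = k+1 \<and> odd n}" using k by (auto simp: sl_def k_def)
  show "{i\<in>{1..n}. rl n i = 1} = {1..k}" using k by (auto simp: rl_def k_def)
  show "{i\<in>{1..n}. rl n i = -1} = {k+1..n}" using k by (auto simp: rl_def k_def)
  show "{i\<in>{1..n}. rl n i = 2} = {}" by (auto simp: rl_def)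
  show "{i\<in>{1..n}. rl n i = -2} = {}" by (auto simp: rl_def)
  show "{v\<in>{0..n}. Lv n v = 1} = insert 0 {2..k}" using k by (auto simp: Lv_def k_def)
  show "{v\<in>{0..n}. Lv n v = -1} = {k+2..n} \<union> {i. i = k+1 \<and> even n}" using k by (auto simp: Lv_def k_def)
  show "{v\<in>{0..n}. Lv n v = 2} = {1}" using k by (auto simp: Lv_def k_def)
  show "{v\<in>{0..n}. Lv n v = -2} = {i. i = k+1 \<and> odd n}" using k by (auto simp: Lv_def k_def)
qed

theorem theorem6:
  fixes n :: nat
  assumes "n \<ge> 3"
  shows "Hk_cordial 2 (wheel_vertices n) (wheel_edges n)"
proof -
  define k where "k = n div 2"
  have k: "1 \<le> k" "k + 2 \<le> n" using assms by (auto simp: k_def)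
  have vcong: "{v\<in>{0..n}. vertex_label (wheel_edges n) (lab n) v = c} = {v\<in>{0..n}. Lv n v = c}" for c
    using vl[OF assms] by auto
  have ec: "card {e \<in> wheel_edges n. lab n e = c} =
         card {i \<in> {1..n}. sl n i = c} + card {i \<in> {1..n}. rl n i = c}" for c
    using edge_card[OF assms, of "\<lambda>x. x = c"] by simp
  note S = sets[OF assms, folded k_def]
  have c1: "\<bar>int (card {e\<in>wheel_edges n. lab n e = c}) - int (card {e\<in>wheel_edges n. lab n e = - c})\<bar> \<le> 1 \<and>
        \<bar>int (card {v\<in>{0..n}. vertex_label (wheel_edges n) (lab n) v = c}) - int (card {v\<in>{0..n}. vertex_label (wheel_edges n) (lab n) v = - c})\<bar> \<le> 1"
    if "c = 1 \<or> c = 2" for c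
  proof (cases "even n")
    case True
    then have nk: "n = 2 * k" by (auto simp: k_def)
    from that show ?thesis
      apply (elim disjE; hypsubst)
       apply (simp only: vcong ec S)
       apply (simp add: True card_insert_if nk)
      apply (simp only: vcong ec S)
      apply (simp add: True card_insert_if nk)
      done
  next
    case False
    then have nk: "n = 2 * k + 1" by (auto simp: k_def)
    from that show ?thesis
      apply (elim disjE; hypsubst)
       apply (simp only: vcong ec S)
       apply (simp add: False card_insert_if nk)
      apply (simp only: vcong ec S)
      apply (simp add: False card_insert_if nk)
      done
  qed
  have e1: "\<forall>e\<in>wheel_edges n. 1 \<le> \<bar>lab n e\<bar> \<and> \<bar>lab n e\<bar> \<le> 2"
    unfolding lab_def sl_def by auto
  have v1: "\<forall>v\<in>{0..n}. 1 \<le> \<bar>vertex_label (wheel_edges n) (lab n) v\<bar> \<and> \<bar>vertex_label (wheel_edges n) (lab n) v\<bar> \<le> 2"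
    using vl[OF assms] unfolding Lv_def by auto
  have "Hk_cordial_labeling 2 (wheel_vertices n) (wheel_edges n) (lab n)"
    unfolding Hk_cordial_labeling_def wheel_vertices_def
  proof (intro conjI allI impI)
    fix i :: int assume "1 \<le> i \<and> i \<le> int 2"
    then have "i = 1 \<or> i = 2" by auto
    then show "\<bar>int (card {e\<in>wheel_edges n. lab n e = i}) - int (card {e\<in>wheel_edges n. lab n e = - i})\<bar> \<le> 1"
      "\<bar>int (card {v\<in>{0..n}. vertex_label (wheel_edges n) (lab n) v = i}) - int (card {v\<in>{0..n}. vertex_label (wheel_edges n) (lab n) v = - i})\<bar> \<le> 1"
      using c1 by blast+
  qed (use e1 v1 in auto)
  then show ?thesis unfolding Hk_cordial_def by blast
qed

end
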